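(* Let $e_1,e_2,e_3$ be nonzero integers with $e_1+e_2+e_3=0$. Let $\Lambda=(d_1,d_2,d_3)$ be a triple of nonzero square-free integers with $d_1d_2d_3$ a square. Let $n$ be a positive square-free integer coprime with $e_1e_2e_3$ and $p$ an odd prime factor of $n$. Then $D^{(n)}_\Lambda(\mathbb{Q}_p)\neq\emptyset$ if and only if - $\left(\frac{d_1}{p}\right)=\left(\frac{d_2}{p}\right)=\left(\frac{d_3}{p}\right)=1$, in case $p\nmid d_1d_2d_3$; - $\left(\frac{-e_2e_3d_1}{p}\right)=\left(\frac{e_3n/d_2}{p}\right)=\left(\frac{-e_2n/d_3}{p}\right)=1$, in case $p\nmid d_1$, $p\mid d_2$, $p\mid d_3$; - $\left(\frac{-e_3n/d_1}{p}\right)=\left(\frac{-e_3e_1d_2}{p}\right)=\left(\frac{e_1n/d_3}{p}\right)=1$, in case $p\mid d_1$, $p\nmid d_2$, $p\mid d_3$; - $\left(\frac{e_2n/d_1}{p}\right)=\left(\frac{-e_1n/d_2}{p}\right)=\left(\frac{-e_1e_2d_3}{p}\right)=1$, in case $p\mid d_1$, $p\mid d_2$, $p\nmid d_3$.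
   Context: $D^{(n)}_\Lambda$ is the curve in $\mathbb{P}^3$ with coordinates $(t,u_1,u_2,u_3)$ defined by $e_1nt^2+d_2u_2^2-d_3u_3^2=0$, $e_2nt^2+d_3u_3^2-d_1u_1^2=0$, $e_3nt^2+d_1u_1^2-d_2u_2^2=0$. For a rational number $r$ which is a $p$-adic unit, $\left(\frac{r}{p}\right)$ is the Legendre symbol of its reduction modulo $p$ (so the arguments $n/d_i$ above, with $p\mid d_i$, are $p$-adic units). *)

theory Defs
  imports "HOL-Number_Theory.Number_Theory" "HOL-Computational_Algebra.Squarefree"
begin

text \<open>p-adic integers modelled as the inverse limit of the rings Z/p^k:
  a compatible sequence of residues x k in {0..<p^k}.\<close>
definition padic_int :: "int \<Rightarrow> (nat \<Rightarrow> int) \<Rightarrow> bool" where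
  "padic_int p x \<longleftrightarrow> (\<forall>k. 0 \<le> x k \<and> x k < p ^ k) \<and> (\<forall>k. [x (Suc k) = x k] (mod p ^ k))"

definition padic_unit :: "int \<Rightarrow> (nat \<Rightarrow> int) \<Rightarrow> bool" where
  "padic_unit p x \<longleftrightarrow> \<not> [x 1 = 0] (mod p)"

text \<open>Q_p-points of the curve D^(n)_Lambda in P^3 with coordinates (t,u1,u2,u3).
  Every point of P^3(Q_p) has a representative in Z_p^4 with some coordinate a unit;
  the homogeneous equations hold in Z_p iff they hold modulo every p^k.\<close>
definition D_has_Qp_point :: "int \<Rightarrow> int \<Rightarrow> int \<Rightarrow> int \<Rightarrow> int \<Rightarrow> int \<Rightarrow> int \<Rightarrow> int \<Rightarrow> bool" where
  "D_has_Qp_point e1 e2 e3 d1 d2 d3 n p \<longleftrightarrow>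
     (\<exists>t u1 u2 u3. padic_int p t \<and> padic_int p u1 \<and> padic_int p u2 \<and> padic_int p u3 \<and>
        (padic_unit p t \<or> padic_unit p u1 \<or> padic_unit p u2 \<or> padic_unit p u3) \<and>
        (\<forall>k. [e1 * n * (t k)^2 + d2 * (u2 k)^2 - d3 * (u3 k)^2 = 0] (mod p ^ k) \<and>
             [e2 * n * (t k)^2 + d3 * (u3 k)^2 - d1 * (u1 k)^2 = 0] (mod p ^ k) \<and>
             [e3 * n * (t k)^2 + d1 * (u1 k)^2 - d2 * (u2 k)^2 = 0] (mod p ^ k)))"

text \<open>Legendre symbol of a rational number r = a/b (b > 0, coprime) that is a p-adic unit:
  the Legendre symbol of a * b^(-1) mod p, which equals that of a * b.\<close>
definition Legendre_rat :: "rat \<Rightarrow> int \<Rightarrow> int" where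
  "Legendre_rat r p = (let (a, b) = quotient_of r in Legendre (a * b) p)"

end

theory Submission
  imports Defs
begin


lemma inv_mod_p:
  fixes p e :: int
  assumes "prime p" "\<not> p dvd e"
  shows "\<exists>f. [e*f = 1] (mod p)"
proof -
  have "coprime e p" using assms prime_imp_coprime[of p e] by (simp add: coprime_commute)
  then show ?thesis using cong_solve_coprime_int by blast
qed

lemma Legendre_one_iff:
  fixes p x :: int
  shows "Legendre x p = 1 \<longleftrightarrow> \<not> p dvd x \<and> (\<exists>y. [y^2 = x] (mod p))"
  unfolding Legendre_def QuadRes_def by (auto simp: cong_0_iff)

lemma L_imp:
  fixes p x y c e :: int
  assumes p: "prime p" and c: "\<not> p dvd c" and e: "\<not> p dvd e"
    and h: "[x*c^2 = y*e^2] (mod p)" and L: "Legendre x p = 1"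
  shows "Legendre y p = 1"
proof -
  from L obtain z where x: "\<not> p dvd x" and z: "[z^2 = x] (mod p)" by (auto simp: Legendre_one_iff)
  obtain f where f: "[e*f = 1] (mod p)" using inv_mod_p[OF p e] by blast
  have "\<not> p dvd y"
  proof
    assume "p dvd y"
    then have "p dvd y*e^2" by simp
    then have "p dvd x*c^2" using h by (simp add: cong_dvd_iff)
    then show False using x c p by (simp add: prime_dvd_mult_iff prime_dvd_power_iff)
  qed
  moreover have "[(z*c*f)^2 = y] (mod p)"
  proof -
    have "[(z*c*f)^2 = z^2*c^2*f^2] (mod p)" by (simp add: power_mult_distrib)
    also have "[z^2*c^2*f^2 = x*c^2*f^2] (mod p)" using z by (intro cong_mult cong_refl)
    also have "[(x*c^2)*f^2 = (y*e^2)*f^2] (mod p)" by (rule cong_mult[OF h cong_refl])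
    also have "(y*e^2)*f^2 = y*(e*f)^2" by (simp add: power_mult_distrib)
    also have "[y*(e*f)^2 = y*1^2] (mod p)" using f by (intro cong_mult cong_refl cong_pow)
    finally show ?thesis by simp
  qed
  ultimately show ?thesis by (auto simp: Legendre_one_iff)
qed

lemma L_eq:
  fixes p x y c e :: int
  assumes p: "prime p" and c: "\<not> p dvd c" and e: "\<not> p dvd e"
    and h: "[x*c^2 = y*e^2] (mod p)"
  shows "Legendre x p = 1 \<longleftrightarrow> Legendre y p = 1"
  using L_imp[OF p c e h] L_imp[OF p e c cong_sym[OF h]] by blast

lemma L_one:
  fixes p :: int
  assumes "prime p"
  shows "Legendre 1 p = 1"
proof -
  have "\<not> p dvd 1" using assms by (simp add: prime_int_iff)
  moreover have "[1^2 = (1::int)] (mod p)" by simp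
  ultimately show ?thesis unfolding Legendre_one_iff by blast
qed

lemma L_mult:
  fixes p x y :: int
  assumes "prime p" "Legendre x p = 1" "Legendre y p = 1"
  shows "Legendre (x*y) p = 1"
proof -
  from assms obtain a b where "\<not> p dvd x" "\<not> p dvd y" "[a^2 = x] (mod p)" "[b^2 = y] (mod p)"
    by (auto simp: Legendre_one_iff)
  moreover then have "[(a*b)^2 = x*y] (mod p)" by (simp add: power_mult_distrib cong_mult)
  ultimately show ?thesis using assms(1) by (auto simp: Legendre_one_iff prime_dvd_mult_iff)
qed


lemma hensel_step:
  fixes p a y :: int
  assumes p: "prime p" "odd p" and y: "\<not> p dvd y" and h: "[y^2 = a] (mod p^Suc k)"
  shows "\<exists>z. [z = y] (mod p^Suc k) \<and> [z^2 = a] (mod p^Suc (Suc k))"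
proof -
  obtain c where c: "y^2 - a = p^Suc k * c" using h by (auto simp: cong_iff_dvd_diff dvd_def)
  have "\<not> p dvd 2"
  proof
    assume "p dvd 2"
    then have "p \<le> 2" by (simp add: zdvd_imp_le)
    moreover have "p \<ge> 2" using p(1) prime_ge_2_int by blast
    ultimately show False using p(2) by simp
  qed
  then have "\<not> p dvd 2*y" using p(1) y by (simp add: prime_dvd_mult_iff)
  then obtain f where f: "[(2*y)*f = 1] (mod p)" using inv_mod_p[OF p(1)] by blast
  define s where "s = - c * f"
  have "[c + 2*y*s = c + (-c) * ((2*y)*f)] (mod p)" by (simp add: s_def algebra_simps)
  also have "[c + (-c) * ((2*y)*f) = c + (-c)*1] (mod p)" by (intro cong_add cong_mult cong_refl f)
  finally have ps: "p dvd c + 2*y*s" by (simp add: cong_0_iff)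
  define z where "z = y + p^Suc k * s"
  have "z^2 - a = p^Suc k * (c + 2*y*s) + p^Suc k * p^Suc k * s^2"
    using c by (simp add: z_def power2_eq_square algebra_simps)
  moreover have "p^Suc (Suc k) dvd p^Suc k * (c + 2*y*s)" using ps by simp
  moreover have "p^Suc (Suc k) dvd p^Suc k * p^Suc k * s^2"
  proof -
    have "p^Suc (Suc k) dvd p^Suc k * p^Suc k" by (simp add: power_add[symmetric] le_imp_power_dvd)
    then show ?thesis by simp
  qed
  ultimately have "p^Suc (Suc k) dvd z^2 - a" by simp
  moreover have "[z = y] (mod p^Suc k)" by (simp add: z_def cong_iff_dvd_diff)
  ultimately show ?thesis by (auto simp: cong_iff_dvd_diff)
qed

primrec hseq :: "int \<Rightarrow> int \<Rightarrow> int \<Rightarrow> nat \<Rightarrow> int" where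
  "hseq p a y0 0 = y0"
| "hseq p a y0 (Suc k) = (SOME z. [z = hseq p a y0 k] (mod p^Suc k) \<and> [z^2 = a] (mod p^Suc (Suc k)))"

lemma hseq_props:
  fixes p a y0 :: int
  assumes p: "prime p" "odd p" and y0: "\<not> p dvd y0" and h: "[y0^2 = a] (mod p)"
  shows "[hseq p a y0 k = y0] (mod p) \<and> [(hseq p a y0 k)^2 = a] (mod p^Suc k)
     \<and> [hseq p a y0 (Suc k) = hseq p a y0 k] (mod p^Suc k)"
proof (induction k)
  case 0
  have "\<exists>z. [z = y0] (mod p^Suc 0) \<and> [z^2 = a] (mod p^Suc (Suc 0))"
    using hensel_step[OF p y0, of a 0] h by simp
  then have "[hseq p a y0 (Suc 0) = y0] (mod p^Suc 0)"
    unfolding hseq.simps by (rule someI2_ex) auto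
  then show ?case using h by simp
next
  case (Suc k)
  let ?y = "hseq p a y0 k" and ?y1 = "hseq p a y0 (Suc k)"
  have "\<exists>z. [z = ?y] (mod p^Suc k) \<and> [z^2 = a] (mod p^Suc (Suc k))"
  proof (rule hensel_step[OF p])
    show "\<not> p dvd ?y" using cong_dvd_iff[OF conjunct1[OF Suc.IH]] y0 by simp
    show "[?y^2 = a] (mod p^Suc k)" using Suc.IH by (elim conjE)
  qed
  then have A: "[?y1 = ?y] (mod p^Suc k) \<and> [?y1^2 = a] (mod p^Suc (Suc k))"
    unfolding hseq.simps by (rule someI_ex)
  have "[?y1 = ?y] (mod p)" using conjunct1[OF A] by (rule cong_dvd_modulus) simp
  then have B: "[?y1 = y0] (mod p)" by (rule cong_trans[OF _ conjunct1[OF Suc.IH]])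
  have "\<not> p dvd ?y1" using cong_dvd_iff[OF B] y0 by simp
  then have "\<exists>z. [z = ?y1] (mod p^Suc (Suc k)) \<and> [z^2 = a] (mod p^Suc (Suc (Suc k)))"
    using hensel_step[OF p] A by blast
  then have "[hseq p a y0 (Suc (Suc k)) = ?y1] (mod p^Suc (Suc k))"
    unfolding hseq.simps(2)[of p a y0 "Suc k"] by (rule someI2_ex) auto
  then show ?case using A B by blast
qed

definition coh :: "int \<Rightarrow> (nat \<Rightarrow> int) \<Rightarrow> bool" where
  "coh p y \<longleftrightarrow> (\<forall>k. [y (Suc k) = y k] (mod p^k))"

lemma hensel_sqrt:
  fixes p a :: int
  assumes p: "prime p" "odd p" and a: "Legendre a p = 1"
  shows "\<exists>r. coh p r \<and> \<not> p dvd r 1 \<and> (\<forall>k. [(r k)^2 = a] (mod p^k))"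
proof -
  obtain y0 where y0: "[y0^2 = a] (mod p)" and na: "\<not> p dvd a" using a by (auto simp: Legendre_one_iff)
  have ny: "\<not> p dvd y0"
  proof
    assume "p dvd y0" then have "p dvd y0^2" by (simp add: power2_eq_square)
    then show False using y0 na by (simp add: cong_dvd_iff)
  qed
  note H = hseq_props[OF p ny y0]
  let ?r = "hseq p a y0"
  have "coh p ?r" unfolding coh_def
  proof
    fix k
    have "[?r (Suc k) = ?r k] (mod p^Suc k)" using H by blast
    then show "[?r (Suc k) = ?r k] (mod p^k)" by (rule cong_dvd_modulus) (simp add: le_imp_power_dvd)
  qed
  moreover have "\<not> p dvd ?r 1" using cong_dvd_iff[OF conjunct1[OF H[of 1]]] ny by simp
  moreover have "\<forall>k. [(?r k)^2 = a] (mod p^k)"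
  proof
    fix k
    have "[(?r k)^2 = a] (mod p^Suc k)" using H by blast
    then show "[(?r k)^2 = a] (mod p^k)" by (rule cong_dvd_modulus) (simp add: le_imp_power_dvd)
  qed
  ultimately show ?thesis by blast
qed


lemma coh_const: "coh p (\<lambda>k. c)" by (simp add: coh_def)
lemma coh_mult: "coh p x \<Longrightarrow> coh p y \<Longrightarrow> coh p (\<lambda>k. x k * y k)"
  by (simp add: coh_def cong_mult)

lemma eq_cong:
  fixes m :: int
  assumes "[a = a'] (mod m)" "[b = b'] (mod m)" "[c = c'] (mod m)"
  shows "[A*a^2 + B*b^2 - C*c^2 = A*a'^2 + B*b'^2 - C*c'^2] (mod m)"
  using assms by (intro cong_add cong_diff cong_mult cong_pow cong_refl)

lemma red_padic:
  fixes p :: int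
  assumes "p > 0" "coh p y"
  shows "padic_int p (\<lambda>k. y k mod p^k)"
  unfolding padic_int_def
proof (intro conjI allI)
  fix k
  show "0 \<le> y k mod p^k" "y k mod p^k < p^k" using assms by auto
  have "[y (Suc k) mod p^Suc k = y (Suc k)] (mod p^k)"
    by (rule cong_dvd_modulus[of _ _ "p^Suc k"]) (auto simp: cong_def)
  also have "[y (Suc k) = y k] (mod p^k)" using assms(2) by (simp add: coh_def)
  also have "[y k = y k mod p^k] (mod p^k)" by (simp add: cong_def)
  finally show "[y (Suc k) mod p ^ Suc k = y k mod p ^ k] (mod p ^ k)" .
qed

lemma point_intro:
  fixes e1 e2 e3 d1 d2 d3 n p :: int
  assumes p: "p > 0" and c: "coh p T" "coh p U1" "coh p U2" "coh p U3"
    and u: "\<not> p dvd T 1 \<or> \<not> p dvd U1 1 \<or> \<not> p dvd U2 1 \<or> \<not> p dvd U3 1"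
    and eq: "\<And>k. [e1 * n * (T k)^2 + d2 * (U2 k)^2 - d3 * (U3 k)^2 = 0] (mod p ^ k) \<and>
             [e2 * n * (T k)^2 + d3 * (U3 k)^2 - d1 * (U1 k)^2 = 0] (mod p ^ k) \<and>
             [e3 * n * (T k)^2 + d1 * (U1 k)^2 - d2 * (U2 k)^2 = 0] (mod p ^ k)"
  shows "D_has_Qp_point e1 e2 e3 d1 d2 d3 n p"
  unfolding D_has_Qp_point_def
proof (intro exI conjI allI)
  let ?t = "\<lambda>k. T k mod p^k" and ?u1 = "\<lambda>k. U1 k mod p^k"
    and ?u2 = "\<lambda>k. U2 k mod p^k" and ?u3 = "\<lambda>k. U3 k mod p^k"
  show "padic_int p ?t" "padic_int p ?u1" "padic_int p ?u2" "padic_int p ?u3"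
    using red_padic[OF p] c by auto
  show "padic_unit p ?t \<or> padic_unit p ?u1 \<or> padic_unit p ?u2 \<or> padic_unit p ?u3"
  proof -
    have m: "p dvd X 1 mod p^1 \<longleftrightarrow> p dvd X 1" for X :: "nat \<Rightarrow> int" by (simp add: dvd_mod_iff)
    show ?thesis unfolding padic_unit_def cong_0_iff using u m[of T] m[of U1] m[of U2] m[of U3] by argo
  qed
  fix k
  have r: "[X k mod p^k = X k] (mod p^k)" for X :: "nat \<Rightarrow> int" by (simp add: cong_def)
  have e: "[e1 * n * (T k)^2 + d2 * (U2 k)^2 - d3 * (U3 k)^2 = 0] (mod p ^ k)"
     "[e2 * n * (T k)^2 + d3 * (U3 k)^2 - d1 * (U1 k)^2 = 0] (mod p ^ k)"
     "[e3 * n * (T k)^2 + d1 * (U1 k)^2 - d2 * (U2 k)^2 = 0] (mod p ^ k)" using eq by auto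
  show "[e1 * n * (?t k)^2 + d2 * (?u2 k)^2 - d3 * (?u3 k)^2 = 0] (mod p ^ k)"
    by (rule cong_trans[OF eq_cong[OF r[of T] r[of U2] r[of U3]] e(1)])
  show "[e2 * n * (?t k)^2 + d3 * (?u3 k)^2 - d1 * (?u1 k)^2 = 0] (mod p ^ k)"
    by (rule cong_trans[OF eq_cong[OF r[of T] r[of U3] r[of U1]] e(2)])
  show "[e3 * n * (?t k)^2 + d1 * (?u1 k)^2 - d2 * (?u2 k)^2 = 0] (mod p ^ k)"
    by (rule cong_trans[OF eq_cong[OF r[of T] r[of U1] r[of U2]] e(3)])
qed

lemma point_elim:
  fixes e1 e2 e3 d1 d2 d3 n p :: int
  assumes "D_has_Qp_point e1 e2 e3 d1 d2 d3 n p"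
  shows "\<exists>T U1 U2 U3. (\<not> p dvd T \<or> \<not> p dvd U1 \<or> \<not> p dvd U2 \<or> \<not> p dvd U3) \<and>
         [e1 * n * T^2 + d2 * U2^2 - d3 * U3^2 = 0] (mod p ^ 2) \<and>
         [e2 * n * T^2 + d3 * U3^2 - d1 * U1^2 = 0] (mod p ^ 2) \<and>
         [e3 * n * T^2 + d1 * U1^2 - d2 * U2^2 = 0] (mod p ^ 2)"
proof -
  obtain t u1 u2 u3 where pi: "padic_int p t" "padic_int p u1" "padic_int p u2" "padic_int p u3"
    and un: "padic_unit p t \<or> padic_unit p u1 \<or> padic_unit p u2 \<or> padic_unit p u3"
    and eq: "\<forall>k. [e1 * n * (t k)^2 + d2 * (u2 k)^2 - d3 * (u3 k)^2 = 0] (mod p ^ k) \<and>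
             [e2 * n * (t k)^2 + d3 * (u3 k)^2 - d1 * (u1 k)^2 = 0] (mod p ^ k) \<and>
             [e3 * n * (t k)^2 + d1 * (u1 k)^2 - d2 * (u2 k)^2 = 0] (mod p ^ k)"
    using assms unfolding D_has_Qp_point_def by (elim exE conjE) (rule that; assumption)
  have s: "\<not> p dvd x 2" if "padic_int p x" "padic_unit p x" for x
  proof -
    have "[x (Suc 1) = x 1] (mod p^1)" using that(1) unfolding padic_int_def by blast
    then show ?thesis using that(2) unfolding padic_unit_def by (simp add: cong_0_iff cong_dvd_iff numeral_2_eq_2)
  qed
  show ?thesis
  proof (rule exI[of _ "t 2"], rule exI[of _ "u1 2"], rule exI[of _ "u2 2"], rule exI[of _ "u3 2"], intro conjI)
    show "\<not> p dvd t 2 \<or> \<not> p dvd u1 2 \<or> \<not> p dvd u2 2 \<or> \<not> p dvd u3 2"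
      using un s[OF pi(1)] s[OF pi(2)] s[OF pi(3)] s[OF pi(4)] by argo
    show "[e1 * n * (t 2)^2 + d2 * (u2 2)^2 - d3 * (u3 2)^2 = 0] (mod p ^ 2)"
             "[e2 * n * (t 2)^2 + d3 * (u3 2)^2 - d1 * (u1 2)^2 = 0] (mod p ^ 2)"
             "[e3 * n * (t 2)^2 + d1 * (u1 2)^2 - d2 * (u2 2)^2 = 0] (mod p ^ 2)"
      using eq by blast+
  qed
qed

lemma D_shift:
  assumes "D_has_Qp_point e1 e2 e3 d1 d2 d3 n p"
  shows "D_has_Qp_point e2 e3 e1 d2 d3 d1 n p"
proof -
  obtain t u1 u2 u3 where pi: "padic_int p t" "padic_int p u1" "padic_int p u2" "padic_int p u3"
    and un: "padic_unit p t \<or> padic_unit p u1 \<or> padic_unit p u2 \<or> padic_unit p u3"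
    and eq: "\<forall>k. [e1 * n * (t k)^2 + d2 * (u2 k)^2 - d3 * (u3 k)^2 = 0] (mod p ^ k) \<and>
             [e2 * n * (t k)^2 + d3 * (u3 k)^2 - d1 * (u1 k)^2 = 0] (mod p ^ k) \<and>
             [e3 * n * (t k)^2 + d1 * (u1 k)^2 - d2 * (u2 k)^2 = 0] (mod p ^ k)"
    using assms unfolding D_has_Qp_point_def by (elim exE conjE) (rule that; assumption)
  show ?thesis unfolding D_has_Qp_point_def
  proof (rule exI[of _ t], rule exI[of _ u2], rule exI[of _ u3], rule exI[of _ u1], intro conjI allI)
    show "padic_int p t" "padic_int p u2" "padic_int p u3" "padic_int p u1" using pi by auto
    show "padic_unit p t \<or> padic_unit p u2 \<or> padic_unit p u3 \<or> padic_unit p u1" using un by blast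
    fix k
    have E: "[e1 * n * (t k)^2 + d2 * (u2 k)^2 - d3 * (u3 k)^2 = 0] (mod p ^ k)"
             "[e2 * n * (t k)^2 + d3 * (u3 k)^2 - d1 * (u1 k)^2 = 0] (mod p ^ k)"
             "[e3 * n * (t k)^2 + d1 * (u1 k)^2 - d2 * (u2 k)^2 = 0] (mod p ^ k)"
      using eq by blast+
    show "[e2 * n * (t k)^2 + d3 * (u3 k)^2 - d1 * (u1 k)^2 = 0] (mod p ^ k)" by (rule E(2))
    show "[e3 * n * (t k)^2 + d1 * (u1 k)^2 - d2 * (u2 k)^2 = 0] (mod p ^ k)" by (rule E(3))
    show "[e1 * n * (t k)^2 + d2 * (u2 k)^2 - d3 * (u3 k)^2 = 0] (mod p ^ k)" by (rule E(1))
  qed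
qed

lemma D_shift_iff:
  "D_has_Qp_point e1 e2 e3 d1 d2 d3 n p \<longleftrightarrow> D_has_Qp_point e2 e3 e1 d2 d3 d1 n p"
  using D_shift by blast


lemma Lrat:
  fixes A B A' B' g p :: int
  assumes p: "prime p" and g: "g \<noteq> 0" and B': "B' \<noteq> 0" and nA: "\<not> p dvd A'" and nB: "\<not> p dvd B'"
    and A: "A = A' * g" and B: "B = B' * g"
  shows "Legendre_rat (of_int A / of_int B) p = 1 \<longleftrightarrow> Legendre (A' * B') p = 1"
proof -
  obtain a b where q: "quotient_of (of_int A / of_int B) = (a, b)" by (cases "quotient_of (of_int A / of_int B)") auto
  have r: "(of_int A / of_int B :: rat) = of_int a / of_int b" using quotient_of_div[OF q] .
  have bpos: "b > 0" using quotient_of_denom_pos[OF q] .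
  have cop: "coprime a b" using quotient_of_coprime[OF q] .
  have "(of_int A / of_int B :: rat) = of_int A' / of_int B'" using g A B by simp
  then have "(of_int A' / of_int B' :: rat) = of_int a / of_int b" using r by simp
  then have "(of_int (a * B') :: rat) = of_int (b * A')" using B' bpos
    by (simp add: field_simps)
  then have ab: "a * B' = b * A'" by (simp only: of_int_eq_iff)
  then have "b dvd a * B'" by simp
  then have "b dvd B'" using cop by (simp add: coprime_commute coprime_dvd_mult_right_iff)
  then have nb: "\<not> p dvd b" using nB dvd_trans by blast
  have eq: "(a*b) * B'^2 = (A'*B') * b^2"
  proof -
    have "(a*b) * B'^2 = (a*B') * (b*B')" by (simp add: power2_eq_square algebra_simps)
    also have "\<dots> = (b*A') * (b*B')" using ab by simp
    finally show ?thesis by (simp add: power2_eq_square algebra_simps)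
  qed
  have "Legendre_rat (of_int A / of_int B) p = Legendre (a*b) p"
    unfolding Legendre_rat_def q by simp
  moreover have "Legendre (a*b) p = 1 \<longleftrightarrow> Legendre (A'*B') p = 1"
    by (rule L_eq[OF p nB nb]) (simp add: eq)
  ultimately show ?thesis by simp
qed

lemma plug:
  fixes m :: int
  assumes "[X = a] (mod m)" "[Y = b] (mod m)" "A + B*a - C*b = 0"
  shows "[A + B*X - C*Y = 0] (mod m)"
proof -
  have "[A + B*X - C*Y = A + B*a - C*b] (mod m)" using assms by (intro cong_add cong_diff cong_mult cong_refl)
  then show ?thesis using assms(3) by simp
qed

lemma dvd_sq: fixes p x :: int shows "prime p \<Longrightarrow> p dvd x^2 \<longleftrightarrow> p dvd x"
  by (simp add: prime_dvd_power_iff)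


lemma dvd3: fixes p X Y Z :: int shows "p dvd X \<Longrightarrow> p dvd X + Y - Z \<Longrightarrow> p dvd Y - Z"
  by (metis add_diff_eq dvd_add_right_iff)
lemma dvd_sub_iff: fixes p a b :: int shows "p dvd a - b \<Longrightarrow> p dvd a \<longleftrightarrow> p dvd b"
  by (metis diff_add_cancel dvd_add_right_iff)
lemma sqd: fixes p d U :: int shows "p dvd U \<Longrightarrow> p^2 dvd d * U^2"
  by (simp add: dvd_mult2 dvd_power_same)
lemma dvd4: fixes p X Y Z :: int shows "p dvd X \<Longrightarrow> p dvd Y \<Longrightarrow> p dvd X + Y - Z \<Longrightarrow> p dvd Z"
proof -
  assume a: "p dvd X" "p dvd Y" "p dvd X + Y - Z"
  have eq: "Z = (X + Y) - (X + Y - Z)" by simp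
  show ?thesis by (subst eq) (rule dvd_diff[OF dvd_add[OF a(1) a(2)] a(3)])
qed
lemma dvd5: fixes q X Y Z :: int shows "q dvd X + Y - Z \<Longrightarrow> q dvd Z \<Longrightarrow> q dvd X + Y"
proof -
  assume a: "q dvd X + Y - Z" "q dvd Z"
  have eq: "X + Y = (X + Y - Z) + Z" by simp
  show ?thesis by (subst eq) (rule dvd_add[OF a(1) a(2)])
qed
lemma dvd6: fixes q X Z W :: int shows "q dvd X + Z - W \<Longrightarrow> q dvd Z \<Longrightarrow> q dvd X - W"
proof -
  assume a: "q dvd X + Z - W" "q dvd Z"
  have eq: "X - W = (X + Z - W) - Z" by simp
  show ?thesis by (subst eq) (rule dvd_diff[OF a(1) a(2)])
qed
lemma dvd_add_iff2: fixes p a b :: int shows "p dvd a + b \<Longrightarrow> p dvd a \<longleftrightarrow> p dvd b"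
  using dvd_add_right_iff[of p a b] dvd_add_left_iff[of p b a] by blast

lemma case1:
  fixes e1 e2 e3 d1 d2 d3 n n' p m :: int
  assumes p: "prime p" "odd p" and n: "n = p * n'" and ne: "\<not> p dvd e1 * n'"
    and nd: "\<not> p dvd d1 * d2 * d3" and m: "d1 * d2 * d3 = m^2" and esum: "e1 + e2 + e3 = 0"
  shows "D_has_Qp_point e1 e2 e3 d1 d2 d3 n p \<longleftrightarrow>
           Legendre d1 p = 1 \<and> Legendre d2 p = 1 \<and> Legendre d3 p = 1"
proof
  have p0: "p > 0" using p(1) prime_gt_0_int by blast
  have nd1: "\<not> p dvd d1" and nd2: "\<not> p dvd d2" and nd3: "\<not> p dvd d3" using nd by auto
  have "\<not> p dvd m^2" using nd m by simp
  then have nm: "\<not> p dvd m" using p(1) by (simp add: dvd_sq)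
  have Ld: "Legendre d1 p = 1 \<and> Legendre d2 p = 1 \<and> Legendre d3 p = 1"
    if L12: "Legendre (d1*d2) p = 1" and L23: "Legendre (d2*d3) p = 1" and L31: "Legendre (d3*d1) p = 1"
  proof -
    have "Legendre d1 p = 1 \<longleftrightarrow> Legendre (d2*d3) p = 1"
      by (rule L_eq[OF p(1) nm nd1]) (simp only: m[symmetric], simp add: power2_eq_square algebra_simps)
    moreover have "Legendre d2 p = 1 \<longleftrightarrow> Legendre (d3*d1) p = 1"
      by (rule L_eq[OF p(1) nm nd2]) (simp only: m[symmetric], simp add: power2_eq_square algebra_simps)
    moreover have "Legendre d3 p = 1 \<longleftrightarrow> Legendre (d1*d2) p = 1"
      by (rule L_eq[OF p(1) nm nd3]) (simp only: m[symmetric], simp add: power2_eq_square algebra_simps)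
    ultimately show ?thesis using that by blast
  qed
  show "D_has_Qp_point e1 e2 e3 d1 d2 d3 n p \<Longrightarrow>
           Legendre d1 p = 1 \<and> Legendre d2 p = 1 \<and> Legendre d3 p = 1"
  proof -
    assume "D_has_Qp_point e1 e2 e3 d1 d2 d3 n p"
    from point_elim[OF this] obtain T U1 U2 U3 where
      u: "\<not> p dvd T \<or> \<not> p dvd U1 \<or> \<not> p dvd U2 \<or> \<not> p dvd U3"
      and q1: "[e1 * n * T^2 + d2 * U2^2 - d3 * U3^2 = 0] (mod p ^ 2)"
      and q2: "[e2 * n * T^2 + d3 * U3^2 - d1 * U1^2 = 0] (mod p ^ 2)"
      and q3: "[e3 * n * T^2 + d1 * U1^2 - d2 * U2^2 = 0] (mod p ^ 2)" by blast
    have Q1: "p dvd d2 * U2^2 - d3 * U3^2"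
    proof (rule dvd3)
      show "p dvd e1 * n * T^2" by (simp add: n)
      show "p dvd e1 * n * T^2 + d2 * U2^2 - d3 * U3^2" using cong_dvd_modulus[OF q1, of p] by (simp add: cong_0_iff)
    qed
    have Q2: "p dvd d3 * U3^2 - d1 * U1^2"
    proof (rule dvd3)
      show "p dvd e2 * n * T^2" by (simp add: n)
      show "p dvd e2 * n * T^2 + d3 * U3^2 - d1 * U1^2" using cong_dvd_modulus[OF q2, of p] by (simp add: cong_0_iff)
    qed
    have Q3: "p dvd d1 * U1^2 - d2 * U2^2"
    proof (rule dvd3)
      show "p dvd e3 * n * T^2" by (simp add: n)
      show "p dvd e3 * n * T^2 + d1 * U1^2 - d2 * U2^2" using cong_dvd_modulus[OF q3, of p] by (simp add: cong_0_iff)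
    qed
    have i: "p dvd d_i * U_i^2 \<longleftrightarrow> p dvd U_i" if "\<not> p dvd d_i" for d_i U_i :: int
      using that p(1) by (simp add: prime_dvd_mult_iff dvd_sq)
    have e12: "p dvd U1 \<longleftrightarrow> p dvd U2" using dvd_sub_iff[OF Q3] i[OF nd1, of U1] i[OF nd2, of U2]
      by blast
    have e23: "p dvd U2 \<longleftrightarrow> p dvd U3" using dvd_sub_iff[OF Q1] i[OF nd2, of U2] i[OF nd3, of U3]
      by blast
    have nU1: "\<not> p dvd U1"
    proof
      assume "p dvd U1"
      then have a: "p dvd U1" "p dvd U2" "p dvd U3" using e12 e23 by auto
      then have nT: "\<not> p dvd T" using u by blast
      note sq = sqd
      have "p^2 dvd e1 * n * T^2 + d2 * U2^2 - d3 * U3^2" using q1 by (simp add: cong_0_iff)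
      moreover have "e1 * n * T^2 = (e1 * n * T^2 + d2 * U2^2 - d3 * U3^2) - d2 * U2^2 + d3 * U3^2"
        by simp
      ultimately have "p^2 dvd e1 * n * T^2" using sq[OF a(2), of d2] sq[OF a(3), of d3]
        by (metis dvd_add dvd_diff)
      then have "p * p dvd p * (e1 * n' * T^2)" by (simp add: n power2_eq_square algebra_simps)
      then have "p dvd e1 * n' * T^2" using p0 by simp
      then show False using ne nT p(1) by (simp add: prime_dvd_mult_iff dvd_sq)
    qed
    then have nU2: "\<not> p dvd U2" and nU3: "\<not> p dvd U3" using e12 e23 by auto
    have c12: "[d1 * U1^2 = d2 * U2^2] (mod p)" using Q3 by (simp add: cong_iff_dvd_diff)
    have c23: "[d2 * U2^2 = d3 * U3^2] (mod p)" using Q1 by (simp add: cong_iff_dvd_diff)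
    have c31: "[d3 * U3^2 = d1 * U1^2] (mod p)" using Q2 by (simp add: cong_iff_dvd_diff)
    have ne2: "\<not> p dvd d * U" if "\<not> p dvd d" "\<not> p dvd U" for d U
      using that p(1) by (simp add: prime_dvd_mult_iff)
    have "Legendre (d1*d2) p = 1 \<longleftrightarrow> Legendre 1 p = 1"
    proof (rule L_eq[OF p(1) nU1 ne2[OF nd2 nU2]])
      have "[d2 * (d1 * U1^2) = d2 * (d2 * U2^2)] (mod p)" by (rule cong_mult[OF cong_refl c12])
      then show "[d1 * d2 * U1\<^sup>2 = 1 * (d2 * U2)\<^sup>2] (mod p)" by (simp add: power2_eq_square algebra_simps)
    qed
    moreover have "Legendre (d2*d3) p = 1 \<longleftrightarrow> Legendre 1 p = 1"
    proof (rule L_eq[OF p(1) nU2 ne2[OF nd3 nU3]])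
      have "[d3 * (d2 * U2^2) = d3 * (d3 * U3^2)] (mod p)" by (rule cong_mult[OF cong_refl c23])
      then show "[d2 * d3 * U2\<^sup>2 = 1 * (d3 * U3)\<^sup>2] (mod p)" by (simp add: power2_eq_square algebra_simps)
    qed
    moreover have "Legendre (d3*d1) p = 1 \<longleftrightarrow> Legendre 1 p = 1"
    proof (rule L_eq[OF p(1) nU3 ne2[OF nd1 nU1]])
      have "[d1 * (d3 * U3^2) = d1 * (d1 * U1^2)] (mod p)" by (rule cong_mult[OF cong_refl c31])
      then show "[d3 * d1 * U3\<^sup>2 = 1 * (d1 * U1)\<^sup>2] (mod p)" by (simp add: power2_eq_square algebra_simps)
    qed
    ultimately show ?thesis using Ld L_one[OF p(1)] by blast
  qed
  show "Legendre d1 p = 1 \<and> Legendre d2 p = 1 \<and> Legendre d3 p = 1 \<Longrightarrow>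
          D_has_Qp_point e1 e2 e3 d1 d2 d3 n p"
  proof -
    assume L: "Legendre d1 p = 1 \<and> Legendre d2 p = 1 \<and> Legendre d3 p = 1"
    obtain r1 where r1: "coh p r1" "\<not> p dvd r1 1" "\<forall>k. [(r1 k)^2 = d2*d3] (mod p^k)"
      using hensel_sqrt[OF p L_mult[OF p(1)]] L by blast
    obtain r2 where r2: "coh p r2" "\<forall>k. [(r2 k)^2 = d3*d1] (mod p^k)"
      using hensel_sqrt[OF p L_mult[OF p(1)]] L by blast
    obtain r3 where r3: "coh p r3" "\<forall>k. [(r3 k)^2 = d1*d2] (mod p^k)"
      using hensel_sqrt[OF p L_mult[OF p(1)]] L by blast
    show ?thesis
    proof (rule point_intro[OF p0 coh_const[of p 0] r1(1) r2(1) r3(1)])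
      fix k
      show "[e1 * n * 0\<^sup>2 + d2 * (r2 k)\<^sup>2 - d3 * (r3 k)\<^sup>2 = 0] (mod p ^ k) \<and>
         [e2 * n * 0\<^sup>2 + d3 * (r3 k)\<^sup>2 - d1 * (r1 k)\<^sup>2 = 0] (mod p ^ k) \<and>
         [e3 * n * 0\<^sup>2 + d1 * (r1 k)\<^sup>2 - d2 * (r2 k)\<^sup>2 = 0] (mod p ^ k)"
      proof (intro conjI)
        show "[e1 * n * 0\<^sup>2 + d2 * (r2 k)\<^sup>2 - d3 * (r3 k)\<^sup>2 = 0] (mod p ^ k)"
          by (rule plug[OF r2(2)[rule_format, of k] r3(2)[rule_format, of k]]) (simp add: algebra_simps)
        show "[e2 * n * 0\<^sup>2 + d3 * (r3 k)\<^sup>2 - d1 * (r1 k)\<^sup>2 = 0] (mod p ^ k)"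
          by (rule plug[OF r3(2)[rule_format, of k] r1(3)[rule_format, of k]]) (simp add: algebra_simps)
        show "[e3 * n * 0\<^sup>2 + d1 * (r1 k)\<^sup>2 - d2 * (r2 k)\<^sup>2 = 0] (mod p ^ k)"
          by (rule plug[OF r1(3)[rule_format, of k] r2(2)[rule_format, of k]]) (simp add: algebra_simps)
      qed
    qed (use r1 in auto)
  qed
qed


lemma case2:
  fixes e1 e2 e3 d1 d2' d3' n' p m' :: int
  assumes p: "prime p" "odd p"
    and nn: "\<not> p dvd n'" and nd1: "\<not> p dvd d1" and nd2: "\<not> p dvd d2'" and nd3: "\<not> p dvd d3'"
    and ne2: "\<not> p dvd e2" and ne3: "\<not> p dvd e3"
    and m: "d1 * d2' * d3' = m'^2" and esum: "e1 + e2 + e3 = 0"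
  shows "D_has_Qp_point e1 e2 e3 d1 (p*d2') (p*d3') (p*n') p \<longleftrightarrow>
           Legendre (- e2 * e3 * d1) p = 1 \<and> Legendre (e3*n'*d2') p = 1 \<and> Legendre (-e2*n'*d3') p = 1"
proof
  have p0: "p > 0" using p(1) prime_gt_0_int by blast
  have "\<not> p dvd d1 * d2' * d3'" using nd1 nd2 nd3 p(1) by (simp add: prime_dvd_mult_iff)
  then have "\<not> p dvd m'^2" using m by simp
  then have nm: "\<not> p dvd m'" using p(1) by (simp add: dvd_sq)
  have ne: "\<not> p dvd d * U" if "\<not> p dvd d" "\<not> p dvd U" for d U
    using that p(1) by (simp add: prime_dvd_mult_iff)
  show "D_has_Qp_point e1 e2 e3 d1 (p*d2') (p*d3') (p*n') p \<Longrightarrow>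
           Legendre (- e2 * e3 * d1) p = 1 \<and> Legendre (e3*n'*d2') p = 1 \<and> Legendre (-e2*n'*d3') p = 1"
  proof -
    assume "D_has_Qp_point e1 e2 e3 d1 (p*d2') (p*d3') (p*n') p"
    from point_elim[OF this] obtain T U1 U2 U3 where
      u: "\<not> p dvd T \<or> \<not> p dvd U1 \<or> \<not> p dvd U2 \<or> \<not> p dvd U3"
      and q2: "[e2 * (p*n') * T^2 + (p*d3') * U3^2 - d1 * U1^2 = 0] (mod p ^ 2)"
      and q3: "[e3 * (p*n') * T^2 + d1 * U1^2 - (p*d2') * U2^2 = 0] (mod p ^ 2)" by blast
    have "p dvd d1 * U1^2"
    proof (rule dvd4)
      show "p dvd e2 * (p*n') * T^2" "p dvd (p*d3') * U3^2" by simp_all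
      show "p dvd e2 * (p*n') * T^2 + (p*d3') * U3^2 - d1 * U1^2"
        using cong_dvd_modulus[OF q2, of p] by (simp add: cong_0_iff)
    qed
    then have pU1: "p dvd U1" using nd1 p(1) by (simp add: prime_dvd_mult_iff dvd_sq)
    then have s1: "p^2 dvd d1 * U1^2" by (simp add: dvd_mult2 dvd_power_same)
    have "p^2 dvd e2 * (p*n') * T^2 + (p*d3') * U3^2 - d1 * U1^2" using q2 by (simp add: cong_0_iff)
    then have "p^2 dvd e2 * (p*n') * T^2 + (p*d3') * U3^2" using s1 by (rule dvd5)
    then have "p * p dvd p * (e2 * n' * T^2 + d3' * U3^2)" by (simp add: power2_eq_square algebra_simps)
    then have Q2: "p dvd e2 * n' * T^2 + d3' * U3^2" using p0 by simp
    have "p^2 dvd e3 * (p*n') * T^2 + d1 * U1^2 - (p*d2') * U2^2" using q3 by (simp add: cong_0_iff)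
    then have "p^2 dvd e3 * (p*n') * T^2 - (p*d2') * U2^2" using s1
      by (rule dvd6)
    then have "p * p dvd p * (e3 * n' * T^2 - d2' * U2^2)" by (simp add: power2_eq_square algebra_simps)
    then have Q3: "p dvd e3 * n' * T^2 - d2' * U2^2" using p0 by simp
    have nT: "\<not> p dvd T"
    proof
      assume pT: "p dvd T"
      then have "p dvd e2 * n' * T^2" "p dvd e3 * n' * T^2" by (simp_all add: power2_eq_square)
      then have "p dvd d3' * U3^2" "p dvd d2' * U2^2"
        using dvd_add_iff2[OF Q2] dvd_sub_iff[OF Q3] by blast+
      then have "p dvd U3" "p dvd U2" using nd2 nd3 p(1) by (auto simp: prime_dvd_mult_iff dvd_sq)
      then show False using u pT pU1 by blast
    qed
    have nX: "\<not> p dvd e * n' * T^2" if "\<not> p dvd e" for e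
      using that nT nn p(1) by (simp add: prime_dvd_mult_iff dvd_sq)
    have nU2: "\<not> p dvd U2"
    proof
      assume "p dvd U2" then have "p dvd d2' * U2^2" by (simp add: power2_eq_square)
      then show False using dvd_sub_iff[OF Q3] nX[OF ne3] by blast
    qed
    have nU3: "\<not> p dvd U3"
    proof
      assume "p dvd U3" then have "p dvd d3' * U3^2" by (simp add: power2_eq_square)
      then show False using dvd_add_iff2[OF Q2] nX[OF ne2] by blast
    qed
    have LA: "Legendre (e3*n'*d2') p = 1 \<longleftrightarrow> Legendre 1 p = 1"
    proof (rule L_eq[OF p(1) nT ne[OF nd2 nU2]])
      have "[e3 * n' * T^2 = d2' * U2^2] (mod p)" using Q3 by (simp add: cong_iff_dvd_diff)
      then have "[d2' * (e3 * n' * T^2) = d2' * (d2' * U2^2)] (mod p)" by (rule cong_mult[OF cong_refl])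
      then show "[e3 * n' * d2' * T\<^sup>2 = 1 * (d2' * U2)\<^sup>2] (mod p)" by (simp add: power2_eq_square algebra_simps)
    qed
    have LB: "Legendre (-e2*n'*d3') p = 1 \<longleftrightarrow> Legendre 1 p = 1"
    proof (rule L_eq[OF p(1) nT ne[OF nd3 nU3]])
      have "- e2 * n' * T^2 - d3' * U3^2 = - (e2 * n' * T^2 + d3' * U3^2)" by simp
      then have "[- e2 * n' * T^2 = d3' * U3^2] (mod p)" using Q2
        by (simp only: cong_iff_dvd_diff dvd_minus_iff)
      then have "[d3' * (- e2 * n' * T^2) = d3' * (d3' * U3^2)] (mod p)" by (rule cong_mult[OF cong_refl])
      then show "[- e2 * n' * d3' * T\<^sup>2 = 1 * (d3' * U3)\<^sup>2] (mod p)" by (simp add: power2_eq_square algebra_simps)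
    qed
    have A: "Legendre (e3*n'*d2') p = 1" "Legendre (-e2*n'*d3') p = 1" using LA LB L_one[OF p(1)] by auto
    have "Legendre (- e2 * e3 * d1) p = 1 \<longleftrightarrow> Legendre ((e3*n'*d2') * (-e2*n'*d3')) p = 1"
    proof (rule L_eq[OF p(1) _ nm])
      show "\<not> p dvd d2' * d3' * n'" using nd2 nd3 nn p(1) by (simp add: prime_dvd_mult_iff)
      have "- e2 * e3 * d1 * (d2' * d3' * n')\<^sup>2 = - e2 * e3 * (d1 * d2' * d3') * (d2' * d3' * n'^2)"
        by (simp add: power2_eq_square algebra_simps)
      also have "\<dots> = e3 * n' * d2' * (- e2 * n' * d3') * m'\<^sup>2"
        unfolding m by (simp add: power2_eq_square algebra_simps)
      finally have eq: "- e2 * e3 * d1 * (d2' * d3' * n')\<^sup>2 = e3 * n' * d2' * (- e2 * n' * d3') * m'\<^sup>2" .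
      show "[- e2 * e3 * d1 * (d2' * d3' * n')\<^sup>2 = e3 * n' * d2' * (- e2 * n' * d3') * m'\<^sup>2] (mod p)"
        unfolding eq by (rule cong_refl)
    qed
    then show ?thesis using A L_mult[OF p(1) A] by blast
  qed
  show "Legendre (- e2 * e3 * d1) p = 1 \<and> Legendre (e3*n'*d2') p = 1 \<and> Legendre (-e2*n'*d3') p = 1 \<Longrightarrow>
    D_has_Qp_point e1 e2 e3 d1 (p*d2') (p*d3') (p*n') p"
  proof -
    assume L: "Legendre (- e2 * e3 * d1) p = 1 \<and> Legendre (e3*n'*d2') p = 1 \<and> Legendre (-e2*n'*d3') p = 1"
    obtain w2 where w2: "coh p w2" "\<forall>k. [(w2 k)^2 = e3*n'*d2'] (mod p^k)"
      using hensel_sqrt[OF p] L by blast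
    obtain w3 where w3: "coh p w3" "\<forall>k. [(w3 k)^2 = -e2*n'*d3'] (mod p^k)"
      using hensel_sqrt[OF p] L by blast
    have s2: "[(d3' * w2 k)^2 = d3'^2 * (e3*n'*d2')] (mod p^k)" for k
    proof -
      have "[d3'^2 * (w2 k)^2 = d3'^2 * (e3*n'*d2')] (mod p^k)" by (rule cong_mult[OF cong_refl w2(2)[rule_format]])
      then show ?thesis by (simp only: power_mult_distrib)
    qed
    have s3: "[(d2' * w3 k)^2 = d2'^2 * (-e2*n'*d3')] (mod p^k)" for k
    proof -
      have "[d2'^2 * (w3 k)^2 = d2'^2 * (-e2*n'*d3')] (mod p^k)" by (rule cong_mult[OF cong_refl w3(2)[rule_format]])
      then show ?thesis by (simp only: power_mult_distrib)
    qed
    have z: "[(0::int)^2 = 0] (mod p^k)" for k by simp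
    have e1: "e1 = - e2 - e3" using esum by simp
    show ?thesis
    proof (rule point_intro[OF p0 coh_const[of p "d2'*d3'"] coh_const[of p 0]
          coh_mult[OF coh_const w2(1)] coh_mult[OF coh_const w3(1)]])
      fix k
      show "[e1 * (p * n') * (d2' * d3')\<^sup>2 + p * d2' * (d3' * w2 k)\<^sup>2 - p * d3' * (d2' * w3 k)\<^sup>2 = 0] (mod p ^ k) \<and>
         [e2 * (p * n') * (d2' * d3')\<^sup>2 + p * d3' * (d2' * w3 k)\<^sup>2 - d1 * 0\<^sup>2 = 0] (mod p ^ k) \<and>
         [e3 * (p * n') * (d2' * d3')\<^sup>2 + d1 * 0\<^sup>2 - p * d2' * (d3' * w2 k)\<^sup>2 = 0] (mod p ^ k)"
        by (intro conjI plug[OF s2 s3] plug[OF s3 z] plug[OF z s2])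
           (simp_all add: e1 power2_eq_square algebra_simps)
    qed (use nd2 nd3 p(1) in \<open>auto simp: prime_dvd_mult_iff\<close>)
  qed
qed


lemma split_sqf:
  fixes p d :: int
  assumes "prime p" "p dvd d" "squarefree d"
  shows "\<exists>d'. d = p*d' \<and> \<not> p dvd d'"
proof -
  obtain d' where d: "d = p*d'" using assms(2) by blast
  have "\<not> p dvd d'"
  proof
    assume "p dvd d'"
    then have "p^2 dvd d" using d by (simp add: power2_eq_square mult_dvd_mono)
    then have "is_unit p" using assms(3) unfolding squarefree_def by blast
    then show False using assms(1) not_prime_unit by blast
  qed
  then show ?thesis using d by blast
qed

lemma sq_cancel:
  fixes p x m :: int
  assumes "prime p" "x * p^2 = m^2"
  shows "\<exists>m'. x = m'^2"
proof -
  have "p dvd m^2" using assms(2)[symmetric] by (simp add: power2_eq_square)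
  then have "p dvd m" using assms(1) by (simp add: dvd_sq)
  then obtain m' where "m = p*m'" by blast
  then have "x * p^2 = m'^2 * p^2" using assms(2) by (simp add: power_mult_distrib)
  then have "x = m'^2" using assms(1) by (simp add: prime_gt_0_int)
  then show ?thesis by blast
qed

theorem lemma2p5:
  fixes e1 e2 e3 d1 d2 d3 n p :: int
  assumes "e1 \<noteq> 0" "e2 \<noteq> 0" "e3 \<noteq> 0" "e1 + e2 + e3 = 0"
    and "d1 \<noteq> 0" "d2 \<noteq> 0" "d3 \<noteq> 0"
    and "squarefree d1" "squarefree d2" "squarefree d3"
    and "\<exists>m::int. d1 * d2 * d3 = m ^ 2"
    and "n > 0" "squarefree n" "coprime n (e1 * e2 * e3)"
    and "prime p" "odd p" "p dvd n"
  shows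
    "(\<not> p dvd d1 * d2 * d3 \<longrightarrow>
        (D_has_Qp_point e1 e2 e3 d1 d2 d3 n p \<longleftrightarrow>
           Legendre d1 p = 1 \<and> Legendre d2 p = 1 \<and> Legendre d3 p = 1)) \<and>
     (\<not> p dvd d1 \<and> p dvd d2 \<and> p dvd d3 \<longrightarrow>
        (D_has_Qp_point e1 e2 e3 d1 d2 d3 n p \<longleftrightarrow>
           Legendre (- e2 * e3 * d1) p = 1 \<and>
           Legendre_rat (of_int e3 * of_int n / of_int d2) p = 1 \<and>
           Legendre_rat (- of_int e2 * of_int n / of_int d3) p = 1)) \<and>
     (p dvd d1 \<and> \<not> p dvd d2 \<and> p dvd d3 \<longrightarrow>
        (D_has_Qp_point e1 e2 e3 d1 d2 d3 n p \<longleftrightarrow>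
           Legendre_rat (- of_int e3 * of_int n / of_int d1) p = 1 \<and>
           Legendre (- e3 * e1 * d2) p = 1 \<and>
           Legendre_rat (of_int e1 * of_int n / of_int d3) p = 1)) \<and>
     (p dvd d1 \<and> p dvd d2 \<and> \<not> p dvd d3 \<longrightarrow>
        (D_has_Qp_point e1 e2 e3 d1 d2 d3 n p \<longleftrightarrow>
           Legendre_rat (of_int e2 * of_int n / of_int d1) p = 1 \<and>
           Legendre_rat (- of_int e1 * of_int n / of_int d2) p = 1 \<and>
           Legendre (- e1 * e2 * d3) p = 1))"
proof -
  note p = assms(15,16)
  have p0: "p \<noteq> 0" using p(1) by auto
  obtain m where m: "d1 * d2 * d3 = m^2" using assms(11) by blast
  obtain n' where n: "n = p*n'" and nn: "\<not> p dvd n'" using split_sqf[OF p(1) assms(17,13)] by blast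
  have ne: "\<not> p dvd e1" "\<not> p dvd e2" "\<not> p dvd e3"
  proof -
    have "\<not> p dvd e1 * e2 * e3"
    proof
      assume "p dvd e1 * e2 * e3"
      then have "is_unit p" using coprime_common_divisor[OF assms(14) assms(17)] by blast
      then show False using p(1) not_prime_unit by blast
    qed
    then show "\<not> p dvd e1" "\<not> p dvd e2" "\<not> p dvd e3" by auto
  qed
  have nen: "\<not> p dvd e * n'" if "\<not> p dvd e" for e using that nn p(1) by (simp add: prime_dvd_mult_iff)
  have rat: "Legendre_rat (of_int e * of_int n / of_int (p*d')) p = 1 \<longleftrightarrow> Legendre (e*n'*d') p = 1"
    if "\<not> p dvd e" "\<not> p dvd d'" for e d'
  proof -
    have "d' \<noteq> 0" using that by auto
    have "Legendre_rat (of_int (e*n) / of_int (p*d')) p = 1 \<longleftrightarrow> Legendre ((e*n')*d') p = 1"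
      by (rule Lrat[OF p(1) p0 \<open>d' \<noteq> 0\<close> nen[OF that(1)] that(2)]) (simp_all add: n)
    then show ?thesis by simp
  qed
  have ratm: "Legendre_rat (- of_int e * of_int n / of_int (p*d')) p = 1 \<longleftrightarrow> Legendre (-e*n'*d') p = 1"
    if "\<not> p dvd e" "\<not> p dvd d'" for e d'
    using rat[of "-e" d'] that by simp
  have C1: "\<not> p dvd d1 * d2 * d3 \<longrightarrow>
        (D_has_Qp_point e1 e2 e3 d1 d2 d3 n p \<longleftrightarrow>
           Legendre d1 p = 1 \<and> Legendre d2 p = 1 \<and> Legendre d3 p = 1)"
    using case1[OF p n nen[OF ne(1)] _ m assms(4)] by blast
  have C2: "\<not> p dvd d1 \<and> p dvd d2 \<and> p dvd d3 \<longrightarrow>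
        (D_has_Qp_point e1 e2 e3 d1 d2 d3 n p \<longleftrightarrow>
           Legendre (- e2 * e3 * d1) p = 1 \<and>
           Legendre_rat (of_int e3 * of_int n / of_int d2) p = 1 \<and>
           Legendre_rat (- of_int e2 * of_int n / of_int d3) p = 1)"
  proof
    assume h: "\<not> p dvd d1 \<and> p dvd d2 \<and> p dvd d3"
    obtain d2' where d2: "d2 = p*d2'" "\<not> p dvd d2'" using split_sqf[OF p(1) _ assms(9)] h by blast
    obtain d3' where d3: "d3 = p*d3'" "\<not> p dvd d3'" using split_sqf[OF p(1) _ assms(10)] h by blast
    have "(d1*d2'*d3') * p^2 = m^2" using m d2 d3 by (simp add: power2_eq_square algebra_simps)
    then obtain m' where "d1*d2'*d3' = m'^2" using sq_cancel[OF p(1)] by blast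
    from case2[OF p nn _ d2(2) d3(2) ne(2,3) this assms(4)] h
    show "D_has_Qp_point e1 e2 e3 d1 d2 d3 n p \<longleftrightarrow>
           Legendre (- e2 * e3 * d1) p = 1 \<and>
           Legendre_rat (of_int e3 * of_int n / of_int d2) p = 1 \<and>
           Legendre_rat (- of_int e2 * of_int n / of_int d3) p = 1"
      using rat[OF ne(3) d2(2)] ratm[OF ne(2) d3(2)] d2(1) d3(1) n by simp
  qed
  have C3: "p dvd d1 \<and> \<not> p dvd d2 \<and> p dvd d3 \<longrightarrow>
        (D_has_Qp_point e1 e2 e3 d1 d2 d3 n p \<longleftrightarrow>
           Legendre_rat (- of_int e3 * of_int n / of_int d1) p = 1 \<and>
           Legendre (- e3 * e1 * d2) p = 1 \<and>
           Legendre_rat (of_int e1 * of_int n / of_int d3) p = 1)"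
  proof
    assume h: "p dvd d1 \<and> \<not> p dvd d2 \<and> p dvd d3"
    obtain d1' where d1: "d1 = p*d1'" "\<not> p dvd d1'" using split_sqf[OF p(1) _ assms(8)] h by blast
    obtain d3' where d3: "d3 = p*d3'" "\<not> p dvd d3'" using split_sqf[OF p(1) _ assms(10)] h by blast
    have "(d2*d3'*d1') * p^2 = m^2" using m d1 d3 by (simp add: power2_eq_square algebra_simps)
    then obtain m' where "d2*d3'*d1' = m'^2" using sq_cancel[OF p(1)] by blast
    from case2[OF p nn _ d3(2) d1(2) ne(3,1) this] h assms(4)
    have "D_has_Qp_point e2 e3 e1 d2 (p*d3') (p*d1') (p*n') p \<longleftrightarrow>
      Legendre (- e3 * e1 * d2) p = 1 \<and> Legendre (e1 * n' * d3') p = 1 \<and> Legendre (- e3 * n' * d1') p = 1"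
      by (simp add: algebra_simps)
    then show "D_has_Qp_point e1 e2 e3 d1 d2 d3 n p \<longleftrightarrow>
           Legendre_rat (- of_int e3 * of_int n / of_int d1) p = 1 \<and>
           Legendre (- e3 * e1 * d2) p = 1 \<and>
           Legendre_rat (of_int e1 * of_int n / of_int d3) p = 1"
      using rat[OF ne(1) d3(2)] ratm[OF ne(3) d1(2)] d1(1) d3(1) n D_shift_iff[of e1 e2 e3 d1 d2 d3 n p]
      by auto
  qed
  have C4: "p dvd d1 \<and> p dvd d2 \<and> \<not> p dvd d3 \<longrightarrow>
        (D_has_Qp_point e1 e2 e3 d1 d2 d3 n p \<longleftrightarrow>
           Legendre_rat (of_int e2 * of_int n / of_int d1) p = 1 \<and>
           Legendre_rat (- of_int e1 * of_int n / of_int d2) p = 1 \<and>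
           Legendre (- e1 * e2 * d3) p = 1)"
  proof
    assume h: "p dvd d1 \<and> p dvd d2 \<and> \<not> p dvd d3"
    obtain d1' where d1: "d1 = p*d1'" "\<not> p dvd d1'" using split_sqf[OF p(1) _ assms(8)] h by blast
    obtain d2' where d2: "d2 = p*d2'" "\<not> p dvd d2'" using split_sqf[OF p(1) _ assms(9)] h by blast
    have "(d3*d1'*d2') * p^2 = m^2" using m d1 d2 by (simp add: power2_eq_square algebra_simps)
    then obtain m' where "d3*d1'*d2' = m'^2" using sq_cancel[OF p(1)] by blast
    from case2[OF p nn _ d1(2) d2(2) ne(1,2) this] h assms(4)
    have "D_has_Qp_point e3 e1 e2 d3 (p*d1') (p*d2') (p*n') p \<longleftrightarrow>
      Legendre (- e1 * e2 * d3) p = 1 \<and> Legendre (e2 * n' * d1') p = 1 \<and> Legendre (- e1 * n' * d2') p = 1"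
      by (simp add: algebra_simps)
    then show "D_has_Qp_point e1 e2 e3 d1 d2 d3 n p \<longleftrightarrow>
           Legendre_rat (of_int e2 * of_int n / of_int d1) p = 1 \<and>
           Legendre_rat (- of_int e1 * of_int n / of_int d2) p = 1 \<and>
           Legendre (- e1 * e2 * d3) p = 1"
      using rat[OF ne(2) d1(2)] ratm[OF ne(1) d2(2)] d1(1) d2(1) n
        D_shift_iff[of e1 e2 e3 d1 d2 d3 n p] D_shift_iff[of e2 e3 e1 d2 d3 d1 n p]
      by auto
  qed
  show ?thesis using C1 C2 C3 C4 by blast
qed

end
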